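(* Under the assumptions in the context, the operator $K$ defined by $K(t,f)=\bigl(\tfrac12\sum_{j=1}^{n-1}k_{n-j,j}(t)f_{n-j}f_j-\sum_{j=1}^\infty k_{n,j}(t)f_nf_j\bigr)_{n=1}^\infty$, $t\in[0,T)$, $f\in\ell^1_{\widetilde w}$, is a continuous mapping from $[0,T)\times\ell^1_{\widetilde w}$ to $\ell^1_w$. Moreover, $K$ is Lipschitz in the second argument on bounded sets, uniformly in the first argument on compact intervals: for every $t'\in[0,T)$ and $r>0$ there is $L$ with $\|K(t,f)-K(t,g)\|_w\le L\|f-g\|_{\widetilde w}$ for all $f,g$ with $\|f\|_{\widetilde w},\|g\|_{\widetilde w}\le r$ and $t\in[0,t']$.
   Context: Let $0<T\le\infty$, $a_n\ge0$, $b_{n,j}\ge0$ with $b_{n,j}=0$ for $j\le n$, $k_{n,j}:[0,T)\to[0,\infty)$ with $k_{n,j}(t)=k_{j,n}(t)$. For a positive sequence $v$, $\ell^1_v=\{f=(f_n)\subset\mathbb R:\|f\|_v=\sum v_n|f_n|<\infty\}$. The weight $w$ satisfies $w_n\ge n$, $(w_n)$ monotone increasing, and $\sum_{n=1}^{j-1}w_nb_{n,j}\le\kappa w_j$ for all $j\ge2$ with some $\kappa\in(0,1]$. Also $\alpha\in[0,1)$ with either (CI) $\alpha=0$, or (CII) $\kappa<1$ and $\alpha\in(0,1)$; $\widetilde w_n=(1+a_n)^\alpha w_n$. Each $k_{n,j}$ is continuous on $[0,T)$, and for every $t'\in(0,T)$ there is $c(t')>0$ with $k_{n,j}(t)\le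 c(t')\widetilde w_n\widetilde w_j/w_{n+j}$ for all $n,j$ and $t\in[0,t']$. *)

theory Defs
  imports "HOL-Analysis.Analysis"
begin

text \<open>Sequences f = (f_n)_{n \<ge> 1} are represented as functions nat \<Rightarrow> real
  with the unused entry f 0 fixed to 0.\<close>

definition ell1 :: "(nat \<Rightarrow> real) \<Rightarrow> (nat \<Rightarrow> real) set" where
  "ell1 v = {f. f 0 = 0 \<and> summable (\<lambda>n. v n * \<bar>f n\<bar>)}"

definition wnorm :: "(nat \<Rightarrow> real) \<Rightarrow> (nat \<Rightarrow> real) \<Rightarrow> real" where
  "wnorm v f = (\<Sum>n. v n * \<bar>f n\<bar>)"

definition Kop :: "(nat \<Rightarrow> nat \<Rightarrow> real \<Rightarrow> real) \<Rightarrow> real \<Rightarrow> (nat \<Rightarrow> real) \<Rightarrow> nat \<Rightarrow> real" where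
  "Kop k t f n = (if n = 0 then 0 else
     (1/2) * (\<Sum>j=1..n-1. k (n-j) j t * f (n-j) * f j)
     - (\<Sum>j. k n (Suc j) t * f n * f (Suc j)))"

end

theory Submission
  imports Defs
begin

definition Bop :: "(nat \<Rightarrow> nat \<Rightarrow> real) \<Rightarrow> (nat \<Rightarrow> real) \<Rightarrow> (nat \<Rightarrow> real) \<Rightarrow> nat \<Rightarrow> real" where
  "Bop q f g n = (if n = 0 then 0 else
     (1/2) * (\<Sum>j=1..n-1. q (n-j) j * f (n-j) * g j)
     - (\<Sum>j. q n (Suc j) * f n * g (Suc j)))"

lemma Kop_Bop: "Kop k t f = Bop (\<lambda>n j. k n j t) f f"
  by (rule ext) (simp add: Kop_def Bop_def)

lemma Bop_0[simp]: "Bop q f g 0 = 0" by (simp add: Bop_def)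

lemma Bop_lin:
  assumes eq: "\<And>a b. q3 a b * f3 a * g3 b = q1 a b * f1 a * g1 b - q2 a b * f2 a * g2 b"
    and s1: "1 \<le> n \<Longrightarrow> summable (\<lambda>j. q1 n (Suc j) * f1 n * g1 (Suc j))"
    and s2: "1 \<le> n \<Longrightarrow> summable (\<lambda>j. q2 n (Suc j) * f2 n * g2 (Suc j))"
  shows "Bop q3 f3 g3 n = Bop q1 f1 g1 n - Bop q2 f2 g2 n"
proof (cases "n = 0")
  case False
  have a: "(\<Sum>j=1..n-1. q3 (n-j) j * f3 (n-j) * g3 j) =
    (\<Sum>j=1..n-1. q1 (n-j) j * f1 (n-j) * g1 j) - (\<Sum>j=1..n-1. q2 (n-j) j * f2 (n-j) * g2 j)"
    by (simp add: eq sum_subtractf)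
  have b: "(\<Sum>j. q3 n (Suc j) * f3 n * g3 (Suc j)) =
    (\<Sum>j. q1 n (Suc j) * f1 n * g1 (Suc j)) - (\<Sum>j. q2 n (Suc j) * f2 n * g2 (Suc j))"
    using False by (simp add: eq suminf_diff[OF s1 s2] Suc_le_eq)
  show ?thesis using False unfolding Bop_def a b by (simp only: if_False right_diff_distrib)
qed simp

locale wsetup =
  fixes w wt :: "nat \<Rightarrow> real"
  assumes w1: "\<And>n. 1 \<le> n \<Longrightarrow> 1 \<le> w n"
    and wmono: "\<And>m n. 1 \<le> m \<Longrightarrow> m \<le> n \<Longrightarrow> w m \<le> w n"
    and wt_ge: "\<And>n. 1 \<le> n \<Longrightarrow> w n \<le> wt n"
begin

lemma wpos: "1 \<le> n \<Longrightarrow> 0 < w n" using w1[of n] by simp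
lemma wtpos: "1 \<le> n \<Longrightarrow> 0 < wt n" using w1[of n] wt_ge[of n] by simp

lemma F_nonneg: "f \<in> ell1 wt \<Longrightarrow> 0 \<le> wt n * \<bar>f n\<bar>"
  by (cases "n = 0") (auto simp: ell1_def intro!: mult_nonneg_nonneg less_imp_le[OF wtpos])

lemma F_summable: "f \<in> ell1 wt \<Longrightarrow> summable (\<lambda>n. wt n * \<bar>f n\<bar>)"
  by (simp add: ell1_def)

lemma wnorm_nonneg: "f \<in> ell1 wt \<Longrightarrow> 0 \<le> wnorm wt f"
  unfolding wnorm_def by (rule suminf_nonneg[OF F_summable F_nonneg])

lemma ell1_diff:
  assumes "f \<in> ell1 wt" "g \<in> ell1 wt"
  shows "(\<lambda>n. f n - g n) \<in> ell1 wt"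
proof -
  have "summable (\<lambda>n. wt n * \<bar>f n\<bar> + wt n * \<bar>g n\<bar>)"
    using assms by (intro summable_add F_summable)
  moreover have "norm (wt n * \<bar>f n - g n\<bar>) \<le> wt n * \<bar>f n\<bar> + wt n * \<bar>g n\<bar>" for n
  proof (cases "n = 0")
    case True then show ?thesis using assms by (simp add: ell1_def)
  next
    case False
    then have "0 < wt n" using wtpos by simp
    then show ?thesis
      by (simp add: abs_mult distrib_left[symmetric] mult_left_mono)
  qed
  ultimately show ?thesis using assms
    by (auto simp: ell1_def intro: summable_comparison_test')
qed

lemma wnorm_tri:
  assumes v: "\<And>n. 1 \<le> n \<Longrightarrow> 0 \<le> v n" and A0: "A 0 = 0" and B0: "B 0 = 0"
    and sA: "summable (\<lambda>n. v n * \<bar>A n\<bar>)" and sB: "summable (\<lambda>n. v n * \<bar>B n\<bar>)"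
  shows "summable (\<lambda>n. v n * \<bar>A n + B n\<bar>) \<and> wnorm v (\<lambda>n. A n + B n) \<le> wnorm v A + wnorm v B"
proof -
  have le: "norm (v n * \<bar>A n + B n\<bar>) \<le> v n * \<bar>A n\<bar> + v n * \<bar>B n\<bar>" for n
  proof (cases "n = 0")
    case True then show ?thesis using A0 B0 by simp
  next
    case False
    then have "0 \<le> v n" using v by simp
    then show ?thesis
      by (simp add: abs_mult distrib_left[symmetric] mult_left_mono)
  qed
  have s: "summable (\<lambda>n. v n * \<bar>A n\<bar> + v n * \<bar>B n\<bar>)" using sA sB by (rule summable_add)
  have s2: "summable (\<lambda>n. v n * \<bar>A n + B n\<bar>)"
    by (rule summable_comparison_test'[OF s le])
  have "wnorm v (\<lambda>n. A n + B n) \<le> (\<Sum>n. v n * \<bar>A n\<bar> + v n * \<bar>B n\<bar>)"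
    unfolding wnorm_def proof (intro suminf_le[OF _ s2 s])
    fix n show "v n * \<bar>A n + B n\<bar> \<le> v n * \<bar>A n\<bar> + v n * \<bar>B n\<bar>"
      using le[of n] abs_ge_self[of "v n * \<bar>A n + B n\<bar>"] by simp
  qed
  also have "\<dots> = wnorm v A + wnorm v B" unfolding wnorm_def by (rule suminf_add[OF sA sB, symmetric])
  finally show ?thesis using s2 by simp
qed


context
  fixes q :: "nat \<Rightarrow> nat \<Rightarrow> real" and f g :: "nat \<Rightarrow> real" and C :: real
  assumes f: "f \<in> ell1 wt" and g: "g \<in> ell1 wt" and C: "0 \<le> C"
    and P: "\<And>n j. 1 \<le> n \<Longrightarrow> 1 \<le> j \<Longrightarrow>
       \<bar>q n j\<bar> * \<bar>f n\<bar> * \<bar>g j\<bar> \<le> C * wt n * wt j / w (n+j) * \<bar>f n\<bar> * \<bar>g j\<bar>"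
begin

lemma termbound:
  assumes n: "1 \<le> n"
  shows "w n * \<bar>q n (Suc j) * f n * g (Suc j)\<bar> \<le> C * (wt n * \<bar>f n\<bar>) * (wt (Suc j) * \<bar>g (Suc j)\<bar>)"
proof -
  let ?m = "Suc j"
  have X0: "0 \<le> C * wt n * wt ?m * \<bar>f n\<bar> * \<bar>g ?m\<bar>"
    using wtpos[of n] wtpos[of ?m] n C by simp
  have wn: "0 < w n" "0 < w (n + ?m)" "w n \<le> w (n + ?m)" using wpos[of n] wpos[of "n + ?m"] wmono[of n "n + ?m"] n by auto
  have "w n * \<bar>q n ?m * f n * g ?m\<bar> = w n * (\<bar>q n ?m\<bar> * \<bar>f n\<bar> * \<bar>g ?m\<bar>)" by (simp add: abs_mult)
  also have "\<dots> \<le> w n * (C * wt n * wt ?m / w (n + ?m) * \<bar>f n\<bar> * \<bar>g ?m\<bar>)"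
    using P[of n ?m] wn n by (intro mult_left_mono) auto
  also have "\<dots> = (w n / w (n + ?m)) * (C * wt n * wt ?m * \<bar>f n\<bar> * \<bar>g ?m\<bar>)" by simp
  also have "\<dots> \<le> 1 * (C * wt n * wt ?m * \<bar>f n\<bar> * \<bar>g ?m\<bar>)"
    using X0 wn by (intro mult_right_mono) (auto simp: divide_le_eq)
  also have "\<dots> = C * (wt n * \<bar>f n\<bar>) * (wt ?m * \<bar>g ?m\<bar>)" by (simp add: ac_simps)
  finally show ?thesis .
qed

lemma inner_summable_abs:
  assumes n: "1 \<le> n"
  shows "summable (\<lambda>j. \<bar>q n (Suc j) * f n * g (Suc j)\<bar>)"
proof (rule summable_comparison_test')
  show "summable (\<lambda>j. C * (wt n * \<bar>f n\<bar>) * (wt (Suc j) * \<bar>g (Suc j)\<bar>))"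
    using F_summable[OF g] summable_Suc_iff[of "\<lambda>n. wt n * \<bar>g n\<bar>"] by (intro summable_mult) simp
  fix j :: nat
  have "\<bar>q n (Suc j) * f n * g (Suc j)\<bar> \<le> w n * \<bar>q n (Suc j) * f n * g (Suc j)\<bar>"
    using w1[OF n] by (simp add: mult_le_cancel_right1)
  then show "norm \<bar>q n (Suc j) * f n * g (Suc j)\<bar> \<le> C * (wt n * \<bar>f n\<bar>) * (wt (Suc j) * \<bar>g (Suc j)\<bar>)"
    using termbound[OF n, of j] by simp
qed

lemma inner_summable:
  assumes n: "1 \<le> n"
  shows "summable (\<lambda>j. q n (Suc j) * f n * g (Suc j))"
  using inner_summable_abs[OF n] by (rule summable_rabs_cancel)

lemma Bop_bound:
  shows "summable (\<lambda>n. w n * \<bar>Bop q f g n\<bar>)"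
    and "wnorm w (Bop q f g) \<le> 3/2 * C * wnorm wt f * wnorm wt g"
proof -
  define F where "F = (\<lambda>m. wt m * \<bar>f m\<bar>)"
  define G where "G = (\<lambda>m. wt m * \<bar>g m\<bar>)"
  have F0: "0 \<le> F m" for m unfolding F_def by (rule F_nonneg[OF f])
  have G0: "0 \<le> G m" for m unfolding G_def by (rule F_nonneg[OF g])
  have sF: "summable F" unfolding F_def by (rule F_summable[OF f])
  have sG: "summable G" unfolding G_def by (rule F_summable[OF g])
  have G00: "G 0 = 0" using g by (simp add: G_def ell1_def)
  have nF: "wnorm wt f = suminf F" by (simp add: wnorm_def F_def)
  have nG: "wnorm wt g = suminf G" by (simp add: wnorm_def G_def)
  have cs: "(\<lambda>n. \<Sum>i\<le>n. G i * F (n - i)) sums (suminf G * suminf F)"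
    using sF sG F0 G0 by (intro Cauchy_product_sums) auto
  define H where "H n = C * (1/2 * (\<Sum>i\<le>n. G i * F (n - i)) + F n * suminf G)" for n
  have Hs: "H sums (C * (1/2 * (suminf G * suminf F) + suminf F * suminf G))"
    unfolding H_def by (intro sums_mult sums_add sums_mult2[OF summable_sums[OF sF]] cs)
  have H0: "0 \<le> H n" for n unfolding H_def using F0 G0 C suminf_nonneg[OF sG G0]
    by (intro mult_nonneg_nonneg add_nonneg_nonneg sum_nonneg) auto
  have le: "w n * \<bar>Bop q f g n\<bar> \<le> H n" for n
  proof (cases "n = 0")
    case True then show ?thesis using H0 by simp
  next
    case False
    then have n: "1 \<le> n" by simp
    define S1 where "S1 = (\<Sum>j=1..n-1. q (n-j) j * f (n-j) * g j)"
    define S2 where "S2 = (\<Sum>j. q n (Suc j) * f n * g (Suc j))"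
    have B: "Bop q f g n = 1/2 * S1 - S2" using False by (simp add: Bop_def S1_def S2_def)
    have wn: "0 < w n" using wpos[OF n] .
    have t1: "w n * \<bar>q (n-j) j * f (n-j) * g j\<bar> \<le> C * (G j * F (n - j))" if j: "j \<in> {1..n-1}" for j
    proof -
      have j1: "1 \<le> j" "1 \<le> n - j" "n - j + j = n" using j by auto
      have "w n * \<bar>q (n-j) j * f (n-j) * g j\<bar> = w n * (\<bar>q (n-j) j\<bar> * \<bar>f (n-j)\<bar> * \<bar>g j\<bar>)"
        by (simp add: abs_mult)
      also have "\<dots> \<le> w n * (C * wt (n-j) * wt j / w (n - j + j) * \<bar>f (n-j)\<bar> * \<bar>g j\<bar>)"
        using P[OF j1(2) j1(1)] wn by (intro mult_left_mono) auto
      also have "\<dots> = C * (G j * F (n - j))"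
        using wn j1(3) by (simp add: F_def G_def)
      finally show ?thesis .
    qed
    have "w n * \<bar>S1\<bar> \<le> w n * (\<Sum>j=1..n-1. \<bar>q (n-j) j * f (n-j) * g j\<bar>)"
      unfolding S1_def using wn by (intro mult_left_mono sum_abs) auto
    also have "\<dots> = (\<Sum>j=1..n-1. w n * \<bar>q (n-j) j * f (n-j) * g j\<bar>)" by (simp add: sum_distrib_left)
    also have "\<dots> \<le> (\<Sum>j=1..n-1. C * (G j * F (n - j)))" by (rule sum_mono[OF t1])
    also have "\<dots> \<le> (\<Sum>j\<le>n. C * (G j * F (n - j)))"
      using F0 G0 C by (intro sum_mono2) auto
    also have "\<dots> = C * (\<Sum>j\<le>n. G j * F (n - j))" by (simp add: sum_distrib_left)
    finally have e1: "w n * \<bar>S1\<bar> \<le> C * (\<Sum>j\<le>n. G j * F (n - j))" .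
    have sa: "summable (\<lambda>j. \<bar>q n (Suc j) * f n * g (Suc j)\<bar>)" by (rule inner_summable_abs[OF n])
    have sb: "summable (\<lambda>j. C * F n * G (Suc j))"
      using sG by (intro summable_mult) (simp add: summable_Suc_iff)
    have "w n * \<bar>S2\<bar> \<le> w n * (\<Sum>j. \<bar>q n (Suc j) * f n * g (Suc j)\<bar>)"
      unfolding S2_def using wn summable_rabs[OF sa] by (intro mult_left_mono) auto
    also have "\<dots> = (\<Sum>j. w n * \<bar>q n (Suc j) * f n * g (Suc j)\<bar>)"
      by (rule suminf_mult[OF sa, symmetric])
    also have "\<dots> \<le> (\<Sum>j. C * F n * G (Suc j))"
      using termbound[OF n] summable_mult[OF sa, of "w n"] sb
      by (intro suminf_le) (auto simp: F_def G_def)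
    also have "\<dots> = C * F n * (\<Sum>j. G (Suc j))" by (rule suminf_mult[OF summable_Suc_iff[THEN iffD2, OF sG]])
    also have "\<dots> = C * F n * suminf G" using suminf_split_head[OF sG] G00 by simp
    finally have e2: "w n * \<bar>S2\<bar> \<le> C * F n * suminf G" .
    have "w n * \<bar>Bop q f g n\<bar> \<le> w n * (1/2 * \<bar>S1\<bar> + \<bar>S2\<bar>)"
      unfolding B using wn by (intro mult_left_mono) auto
    also have "\<dots> = 1/2 * (w n * \<bar>S1\<bar>) + w n * \<bar>S2\<bar>" by (simp add: algebra_simps)
    also have "\<dots> \<le> H n" using e1 e2 unfolding H_def by (simp add: algebra_simps)
    finally show ?thesis .
  qed
  have sH: "summable H" using Hs by (rule sums_summable)
  show s: "summable (\<lambda>n. w n * \<bar>Bop q f g n\<bar>)"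
  proof (rule summable_comparison_test'[OF sH])
    fix n show "norm (w n * \<bar>Bop q f g n\<bar>) \<le> H n"
    proof (cases "n = 0")
      case True then show ?thesis using H0 by simp
    next
      case False then have "0 < w n" using wpos by simp
      then show ?thesis using le[of n] by (simp add: abs_mult)
    qed
  qed
  have "wnorm w (Bop q f g) \<le> suminf H"
    unfolding wnorm_def using le s sH by (rule suminf_le)
  also have "\<dots> = 3/2 * C * wnorm wt f * wnorm wt g"
    using sums_unique[OF Hs] nF nG by (simp add: algebra_simps)
  finally show "wnorm w (Bop q f g) \<le> 3/2 * C * wnorm wt f * wnorm wt g" .
qed
end

lemma P_of_qbd:
  assumes qb: "\<And>n j. 1 \<le> n \<Longrightarrow> 1 \<le> j \<Longrightarrow> \<bar>q n j\<bar> \<le> C * wt n * wt j / w (n+j)"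
    and n: "1 \<le> n" and j: "1 \<le> j"
  shows "\<bar>q n j\<bar> * \<bar>f n\<bar> * \<bar>g j\<bar> \<le> C * wt n * wt j / w (n+j) * \<bar>f n\<bar> * \<bar>g j\<bar>"
  using qb[OF n j] by (intro mult_right_mono) auto

lemma Bop_quad:
  assumes f: "f \<in> ell1 wt" and g: "g \<in> ell1 wt" and C: "0 \<le> C"
    and qb: "\<And>n j. 1 \<le> n \<Longrightarrow> 1 \<le> j \<Longrightarrow> \<bar>q n j\<bar> \<le> C * wt n * wt j / w (n+j)"
  shows "summable (\<lambda>n. w n * \<bar>Bop q f f n - Bop q g g n\<bar>)"
    and "wnorm w (\<lambda>n. Bop q f f n - Bop q g g n) \<le>
       3/2 * C * (wnorm wt (\<lambda>n. f n - g n) * wnorm wt f + wnorm wt g * wnorm wt (\<lambda>n. f n - g n))"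
proof -
  define d where "d = (\<lambda>n. f n - g n)"
  have d: "d \<in> ell1 wt" unfolding d_def by (rule ell1_diff[OF f g])
  have PP: "\<And>f g n j. 1 \<le> n \<Longrightarrow> 1 \<le> j \<Longrightarrow>
     \<bar>q n j\<bar> * \<bar>f n\<bar> * \<bar>g j\<bar> \<le> C * wt n * wt j / w (n+j) * \<bar>f n\<bar> * \<bar>g j\<bar>"
    using qb by (rule P_of_qbd)
  have e1: "Bop q d f n = Bop q f f n - Bop q g f n" for n
    by (rule Bop_lin[OF _ inner_summable[OF f f C PP[where f=f and g=f]] inner_summable[OF g f C PP[where f=g and g=f]]]) (auto simp: algebra_simps d_def)
  have e2: "Bop q g d n = Bop q g f n - Bop q g g n" for n
    by (rule Bop_lin[OF _ inner_summable[OF g f C PP[where f=g and g=f]] inner_summable[OF g g C PP[where f=g and g=g]]]) (auto simp: algebra_simps d_def)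
  have eq: "(\<lambda>n. Bop q f f n - Bop q g g n) = (\<lambda>n. Bop q d f n + Bop q g d n)"
    using e1 e2 by auto
  have T: "summable (\<lambda>n. w n * \<bar>Bop q d f n + Bop q g d n\<bar>) \<and>
      wnorm w (\<lambda>n. Bop q d f n + Bop q g d n) \<le> wnorm w (Bop q d f) + wnorm w (Bop q g d)"
    using wpos by (intro wnorm_tri Bop_bound(1)[OF d f C PP[where f=d and g=f]] Bop_bound(1)[OF g d C PP[where f=g and g=d]]) (auto simp: less_imp_le)
  have b1: "wnorm w (Bop q d f) \<le> 3/2 * C * wnorm wt d * wnorm wt f" by (rule Bop_bound(2)[OF d f C PP[where f=d and g=f]])
  have b2: "wnorm w (Bop q g d) \<le> 3/2 * C * wnorm wt g * wnorm wt d" by (rule Bop_bound(2)[OF g d C PP[where f=g and g=d]])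
  show "summable (\<lambda>n. w n * \<bar>Bop q f f n - Bop q g g n\<bar>)" using T eq by metis
  show "wnorm w (\<lambda>n. Bop q f f n - Bop q g g n) \<le>
       3/2 * C * (wnorm wt (\<lambda>n. f n - g n) * wnorm wt f + wnorm wt g * wnorm wt (\<lambda>n. f n - g n))"
    using T b1 b2 unfolding eq d_def[symmetric] by (simp add: algebra_simps)
qed

end

lemma aux_div: "(x::real) \<noteq> 0 \<Longrightarrow> x * (e / (4 * x)) = e / 4" by simp

theorem proposition4p3:
  fixes T :: ereal and a :: "nat \<Rightarrow> real" and b :: "nat \<Rightarrow> nat \<Rightarrow> real"
    and k :: "nat \<Rightarrow> nat \<Rightarrow> real \<Rightarrow> real"
    and w :: "nat \<Rightarrow> real" and \<kappa> \<alpha> :: real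
  defines "wt \<equiv> (\<lambda>n. (1 + a n) powr \<alpha> * w n)"
  assumes T_pos: "0 < T"
    and a_nonneg: "\<And>n. 1 \<le> n \<Longrightarrow> 0 \<le> a n"
    and b_nonneg: "\<And>n j. 1 \<le> n \<Longrightarrow> 1 \<le> j \<Longrightarrow> 0 \<le> b n j"
    and b_zero: "\<And>n j. 1 \<le> n \<Longrightarrow> 1 \<le> j \<Longrightarrow> j \<le> n \<Longrightarrow> b n j = 0"
    and k_nonneg: "\<And>n j t. 1 \<le> n \<Longrightarrow> 1 \<le> j \<Longrightarrow> 0 \<le> t \<Longrightarrow> ereal t < T \<Longrightarrow> 0 \<le> k n j t"
    and k_sym: "\<And>n j t. 1 \<le> n \<Longrightarrow> 1 \<le> j \<Longrightarrow> 0 \<le> t \<Longrightarrow> ereal t < T \<Longrightarrow> k n j t = k j n t"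
    and k_cont: "\<And>n j. 1 \<le> n \<Longrightarrow> 1 \<le> j \<Longrightarrow> continuous_on {t. 0 \<le> t \<and> ereal t < T} (k n j)"
    and w_ge: "\<And>n. 1 \<le> n \<Longrightarrow> real n \<le> w n"
    and w_mono: "\<And>m n. 1 \<le> m \<Longrightarrow> m \<le> n \<Longrightarrow> w m \<le> w n"
    and kappa: "0 < \<kappa>" "\<kappa> \<le> 1"
    and w_b: "\<And>j. 2 \<le> j \<Longrightarrow> (\<Sum>n=1..j-1. w n * b n j) \<le> \<kappa> * w j"
    and alpha: "0 \<le> \<alpha>" "\<alpha> < 1"
    and cases: "\<alpha> = 0 \<or> (\<kappa> < 1 \<and> 0 < \<alpha> \<and> \<alpha> < 1)"
    and k_bound: "\<And>t'. 0 < t' \<Longrightarrow> ereal t' < T \<Longrightarrow>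
        \<exists>c>0. \<forall>n j t. 1 \<le> n \<longrightarrow> 1 \<le> j \<longrightarrow> 0 \<le> t \<longrightarrow> t \<le> t' \<longrightarrow>
          k n j t \<le> c * wt n * wt j / w (n + j)"
  shows "(\<forall>t f. 0 \<le> t \<longrightarrow> ereal t < T \<longrightarrow> f \<in> ell1 wt \<longrightarrow> Kop k t f \<in> ell1 w)
    \<and> (\<forall>t f. 0 \<le> t \<longrightarrow> ereal t < T \<longrightarrow> f \<in> ell1 wt \<longrightarrow>
         (\<forall>\<epsilon>>0. \<exists>\<delta>>0. \<forall>s g. 0 \<le> s \<longrightarrow> ereal s < T \<longrightarrow> g \<in> ell1 wt \<longrightarrow>
             \<bar>s - t\<bar> < \<delta> \<longrightarrow> wnorm wt (\<lambda>n. g n - f n) < \<delta> \<longrightarrow>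
             wnorm w (\<lambda>n. Kop k s g n - Kop k t f n) < \<epsilon>))
    \<and> (\<forall>t' r. 0 \<le> t' \<longrightarrow> ereal t' < T \<longrightarrow> 0 < r \<longrightarrow>
         (\<exists>L. \<forall>t f g. 0 \<le> t \<longrightarrow> t \<le> t' \<longrightarrow> f \<in> ell1 wt \<longrightarrow> g \<in> ell1 wt \<longrightarrow>
             wnorm wt f \<le> r \<longrightarrow> wnorm wt g \<le> r \<longrightarrow>
             wnorm w (\<lambda>n. Kop k t f n - Kop k t g n) \<le> L * wnorm wt (\<lambda>n. f n - g n)))"

proof -
  have w1: "1 \<le> w n" if "1 \<le> n" for n using w_ge[OF that] that by simp
  have wtge: "w n \<le> wt n" if n: "1 \<le> n" for n
  proof -
    have "1 \<le> (1 + a n) powr \<alpha>" using a_nonneg[OF n] alpha by (intro ge_one_powr_ge_zero) auto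
    then show ?thesis using w1[OF n] unfolding wt_def by (simp add: mult_le_cancel_right1)
  qed
  interpret L: wsetup w wt
    by unfold_locales (auto intro: w1 w_mono wtge)
  have bnd: "\<exists>t1 c. t < t1 \<and> ereal t1 < T \<and> 0 < c \<and> (\<forall>s n j. 0 \<le> s \<longrightarrow> s \<le> t1 \<longrightarrow> 1 \<le> n \<longrightarrow> 1 \<le> j \<longrightarrow>
      \<bar>k n j s\<bar> \<le> c * wt n * wt j / w (n+j))" if t: "0 \<le> t" "ereal t < T" for t
  proof -
    obtain t1 where t1: "ereal t < ereal t1" "ereal t1 < T" using ereal_dense2[OF t(2)] by blast
    then have "t < t1" by simp
    then obtain c where c: "c > 0" "\<forall>n j s. 1 \<le> n \<longrightarrow> 1 \<le> j \<longrightarrow> 0 \<le> s \<longrightarrow> s \<le> t1 \<longrightarrow>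
          k n j s \<le> c * wt n * wt j / w (n + j)" using k_bound[of t1] t1 t by force
    have "\<bar>k n j s\<bar> \<le> c * wt n * wt j / w (n+j)" if "0 \<le> s" "s \<le> t1" "1 \<le> n" "1 \<le> j" for s n j
    proof -
      have "ereal s < T" using that(2) t1(2) by (meson ereal_less_eq(3) order.strict_trans1)
      then have "0 \<le> k n j s" using k_nonneg that by simp
      then show ?thesis using c that by simp
    qed
    then show ?thesis using \<open>t < t1\<close> t1 c by blast
  qed
  have P1: "\<forall>t f. 0 \<le> t \<longrightarrow> ereal t < T \<longrightarrow> f \<in> ell1 wt \<longrightarrow> Kop k t f \<in> ell1 w"
  proof (intro allI impI)
    fix t f assume t: "0 \<le> t" "ereal t < T" and f: "f \<in> ell1 wt"
    obtain t1 c where c: "t < t1" "0 < c" "\<forall>s n j. 0 \<le> s \<longrightarrow> s \<le> t1 \<longrightarrow> 1 \<le> n \<longrightarrow> 1 \<le> j \<longrightarrow>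
      \<bar>k n j s\<bar> \<le> c * wt n * wt j / w (n+j)" using bnd[OF t] by blast
    have qb: "\<And>n j. 1 \<le> n \<Longrightarrow> 1 \<le> j \<Longrightarrow> \<bar>k n j t\<bar> \<le> c * wt n * wt j / w (n+j)" using c t by auto
    have PP: "\<And>n j. 1 \<le> n \<Longrightarrow> 1 \<le> j \<Longrightarrow>
     \<bar>k n j t\<bar> * \<bar>f n\<bar> * \<bar>f j\<bar> \<le> c * wt n * wt j / w (n+j) * \<bar>f n\<bar> * \<bar>f j\<bar>"
      using qb by (rule L.P_of_qbd)
    show "Kop k t f \<in> ell1 w"
      using L.Bop_bound(1)[OF f f _ PP] c unfolding Kop_Bop ell1_def by simp
  qed
  have P3: "\<forall>t' r. 0 \<le> t' \<longrightarrow> ereal t' < T \<longrightarrow> 0 < r \<longrightarrow>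
         (\<exists>L. \<forall>t f g. 0 \<le> t \<longrightarrow> t \<le> t' \<longrightarrow> f \<in> ell1 wt \<longrightarrow> g \<in> ell1 wt \<longrightarrow>
             wnorm wt f \<le> r \<longrightarrow> wnorm wt g \<le> r \<longrightarrow>
             wnorm w (\<lambda>n. Kop k t f n - Kop k t g n) \<le> L * wnorm wt (\<lambda>n. f n - g n))"
  proof (intro allI impI)
    fix t' r :: real assume t': "0 \<le> t'" "ereal t' < T" and r: "0 < r"
    obtain t1 c where c: "t' < t1" "0 < c" "\<forall>s n j. 0 \<le> s \<longrightarrow> s \<le> t1 \<longrightarrow> 1 \<le> n \<longrightarrow> 1 \<le> j \<longrightarrow>
      \<bar>k n j s\<bar> \<le> c * wt n * wt j / w (n+j)" using bnd[OF t'] by blast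
    show "\<exists>L. \<forall>t f g. 0 \<le> t \<longrightarrow> t \<le> t' \<longrightarrow> f \<in> ell1 wt \<longrightarrow> g \<in> ell1 wt \<longrightarrow>
             wnorm wt f \<le> r \<longrightarrow> wnorm wt g \<le> r \<longrightarrow>
             wnorm w (\<lambda>n. Kop k t f n - Kop k t g n) \<le> L * wnorm wt (\<lambda>n. f n - g n)"
    proof (intro exI[of _ "3 * c * r"] allI impI)
      fix t f g assume t: "0 \<le> t" "t \<le> t'" and f: "f \<in> ell1 wt" and g: "g \<in> ell1 wt"
        and fr: "wnorm wt f \<le> r" and gr: "wnorm wt g \<le> r"
      have qb: "\<And>n j. 1 \<le> n \<Longrightarrow> 1 \<le> j \<Longrightarrow> \<bar>k n j t\<bar> \<le> c * wt n * wt j / w (n+j)" using c t by auto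
      define D where "D = wnorm wt (\<lambda>n. f n - g n)"
      have D0: "0 \<le> D" unfolding D_def by (rule L.wnorm_nonneg[OF L.ell1_diff[OF f g]])
      have "wnorm w (\<lambda>n. Kop k t f n - Kop k t g n) \<le> 3/2 * c * (D * wnorm wt f + wnorm wt g * D)"
        unfolding Kop_Bop D_def using c by (intro L.Bop_quad(2)[OF f g _ qb]) auto
      also have "\<dots> \<le> 3/2 * c * (D * r + r * D)"
        using D0 fr gr c by (intro mult_left_mono add_mono mult_right_mono) auto
      also have "\<dots> = 3 * c * r * D" by (simp add: algebra_simps)
      finally show "wnorm w (\<lambda>n. Kop k t f n - Kop k t g n) \<le> 3 * c * r * wnorm wt (\<lambda>n. f n - g n)"
        unfolding D_def .
    qed
  qed
  have P2: "\<forall>t f. 0 \<le> t \<longrightarrow> ereal t < T \<longrightarrow> f \<in> ell1 wt \<longrightarrow>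
         (\<forall>\<epsilon>>0. \<exists>\<delta>>0. \<forall>s g. 0 \<le> s \<longrightarrow> ereal s < T \<longrightarrow> g \<in> ell1 wt \<longrightarrow>
             \<bar>s - t\<bar> < \<delta> \<longrightarrow> wnorm wt (\<lambda>n. g n - f n) < \<delta> \<longrightarrow>
             wnorm w (\<lambda>n. Kop k s g n - Kop k t f n) < \<epsilon>)"
  proof (intro allI impI)
    fix t :: real and f :: "nat \<Rightarrow> real" and \<epsilon> :: real
    assume t: "0 \<le> t" "ereal t < T" and f: "f \<in> ell1 wt" and \<epsilon>: "0 < \<epsilon>"
    obtain t1 c where c: "t < t1" "0 < c" "\<forall>s n j. 0 \<le> s \<longrightarrow> s \<le> t1 \<longrightarrow> 1 \<le> n \<longrightarrow> 1 \<le> j \<longrightarrow>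
      \<bar>k n j s\<bar> \<le> c * wt n * wt j / w (n+j)" using bnd[OF t] by blast
    define R where "R = wnorm wt f"
    have R0: "0 \<le> R" unfolding R_def by (rule L.wnorm_nonneg[OF f])
    define F where "F = (\<lambda>n. wt n * \<bar>f n\<bar>)"
    have sF: "summable F" unfolding F_def by (rule L.F_summable[OF f])
    have F0: "0 \<le> F n" for n unfolding F_def by (rule L.F_nonneg[OF f])
    have f0: "f 0 = 0" using f by (simp add: ell1_def)
    have cR: "0 \<le> c * R" using c R0 by simp
    define \<eta> where "\<eta> = \<epsilon> / (4 * (6*c*R + 1))"
    have \<eta>0: "0 < \<eta>" unfolding \<eta>_def using \<epsilon> cR by (intro divide_pos_pos) auto
    have \<eta>b: "6*c*R*\<eta> \<le> \<epsilon>/4"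
    proof -
      have "6*c*R*\<eta> \<le> (6*c*R + 1) * \<eta>" using \<eta>0 by (simp add: algebra_simps)
      also have "\<dots> = \<epsilon>/4" unfolding \<eta>_def using cR by (intro aux_div) linarith
      finally show ?thesis .
    qed
    obtain N where N: "\<forall>n\<ge>N. norm (\<Sum>i. F (i + n)) < \<eta>" using suminf_exist_split[OF \<eta>0 sF] by blast
    define fN where "fN = (\<lambda>n. if n \<le> N then f n else 0)"
    have fNle: "norm (wt n * \<bar>fN n\<bar>) \<le> F n" for n
      using F0[of n] unfolding fN_def F_def by (cases "n \<le> N") auto
    have fN: "fN \<in> ell1 wt" unfolding ell1_def using f0 summable_comparison_test'[OF sF fNle]
      by (simp add: fN_def)
    have fNR: "wnorm wt fN \<le> R"
      unfolding wnorm_def R_def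
    proof (rule suminf_le)
      fix n show "wt n * \<bar>fN n\<bar> \<le> wt n * \<bar>f n\<bar>"
        using fNle[of n] abs_ge_self[of "wt n * \<bar>fN n\<bar>"] unfolding F_def by simp
    qed (use sF summable_comparison_test'[OF sF fNle] in \<open>auto simp: F_def\<close>)
    define dN where "dN = (\<lambda>n. f n - fN n)"
    have dN: "dN \<in> ell1 wt" unfolding dN_def by (rule L.ell1_diff[OF f fN])
    have dNh: "(\<lambda>n. wt n * \<bar>dN n\<bar>) = (\<lambda>n. if n \<le> N then 0 else F n)"
      by (auto simp: dN_def fN_def F_def)
    have dNeta: "wnorm wt dN < \<eta>"
    proof -
      have sh: "summable (\<lambda>n. if n \<le> N then 0 else F n)" using L.F_summable[OF dN] dNh by simp
      have "wnorm wt dN = (\<Sum>n. if n \<le> N then 0 else F n)" unfolding wnorm_def dNh ..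
      also have "\<dots> = (\<Sum>i. (if i + Suc N \<le> N then 0 else F (i + Suc N))) + (\<Sum>i<Suc N. if i \<le> N then 0 else F i)"
        by (rule suminf_split_initial_segment[OF sh])
      also have "\<dots> = (\<Sum>i. F (i + Suc N))" by simp
      also have "\<dots> \<le> norm (\<Sum>i. F (i + Suc N))" by simp
      also have "\<dots> < \<eta>" using N[rule_format, of "Suc N"] by simp
      finally show ?thesis .
    qed
    have dN0: "0 \<le> wnorm wt dN" by (rule L.wnorm_nonneg[OF dN])
    have fN0: "0 \<le> wnorm wt fN" by (rule L.wnorm_nonneg[OF fN])
    define Dom where "Dom = {s. 0 \<le> s \<and> ereal s < T}"
    define cst where "cst = (\<lambda>n j. w (n+j) / (wt n * wt j))"
    define M where "M = (\<lambda>s. \<Sum>n=1..N. \<Sum>j=1..N. \<bar>k n j s - k n j t\<bar> * cst n j)"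
    have cst0: "0 \<le> cst n j" if "1 \<le> n" "1 \<le> j" for n j
      using L.wpos[of "n+j"] L.wtpos[of n] L.wtpos[of j] that unfolding cst_def by simp
    have contM: "continuous_on Dom M" unfolding M_def Dom_def
      by (intro continuous_on_sum continuous_on_mult_right continuous_on_rabs continuous_on_diff
          continuous_on_const k_cont) auto
    have Mt: "M t = 0" by (simp add: M_def)
    have M0: "0 \<le> M s" for s unfolding M_def by (intro sum_nonneg mult_nonneg_nonneg abs_ge_zero cst0) auto
    define \<gamma> where "\<gamma> = \<epsilon> / (4 * (3/2 * R * R + 1))"
    have \<gamma>0: "0 < \<gamma>" proof -
      have "0 \<le> 3/2 * R * R" using R0 by simp
      then have "0 < 3/2 * R * R + 1" by linarith
      then have "0 < 4 * (3/2 * R * R + 1)" by simp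
      then show ?thesis using \<epsilon> unfolding \<gamma>_def by (intro divide_pos_pos)
    qed
    obtain \<delta>c where \<delta>c: "0 < \<delta>c" "\<forall>s\<in>Dom. dist s t < \<delta>c \<longrightarrow> dist (M s) (M t) < \<gamma>"
    proof -
      have tD: "t \<in> Dom" using t by (simp add: Dom_def)
      have "\<exists>d>0. \<forall>x'\<in>Dom. dist x' t < d \<longrightarrow> dist (M x') (M t) < \<gamma>"
        using bspec[OF contM[unfolded continuous_on_iff] tD] \<gamma>0 by blast
      then show ?thesis using that by blast
    qed
    define \<delta>1 where "\<delta>1 = \<epsilon> / (4 * (3/2 * c * (2*R+1) + 1))"
    have pos1: "0 < 3/2 * c * (2*R+1) + 1"
    proof -
      have "0 \<le> 3/2 * c * (2*R+1)" using c R0 by simp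
      then show ?thesis by linarith
    qed
    have \<delta>10: "0 < \<delta>1"
    proof -
      note pos1
      then have "0 < 4 * (3/2 * c * (2*R+1) + 1)" by simp
      then show ?thesis unfolding \<delta>1_def using \<epsilon> by (intro divide_pos_pos)
    qed
    define \<delta> where "\<delta> = min (min 1 (t1 - t)) (min \<delta>1 \<delta>c)"
    have \<delta>0: "0 < \<delta>" unfolding \<delta>_def using c \<delta>10 \<delta>c by simp
    show "\<exists>\<delta>>0. \<forall>s g. 0 \<le> s \<longrightarrow> ereal s < T \<longrightarrow> g \<in> ell1 wt \<longrightarrow>
             \<bar>s - t\<bar> < \<delta> \<longrightarrow> wnorm wt (\<lambda>n. g n - f n) < \<delta> \<longrightarrow>
             wnorm w (\<lambda>n. Kop k s g n - Kop k t f n) < \<epsilon>"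
    proof (intro exI[of _ \<delta>] conjI allI impI \<delta>0)
      fix s g assume s: "0 \<le> s" "ereal s < T" and g: "g \<in> ell1 wt" and st: "\<bar>s - t\<bar> < \<delta>"
        and gf: "wnorm wt (\<lambda>n. g n - f n) < \<delta>"
      have st1: "s \<le> t1" using st unfolding \<delta>_def by auto
      have qs: "\<And>n j. 1 \<le> n \<Longrightarrow> 1 \<le> j \<Longrightarrow> \<bar>k n j s\<bar> \<le> c * wt n * wt j / w (n+j)" using c s st1 by auto
      have qt: "\<And>n j. 1 \<le> n \<Longrightarrow> 1 \<le> j \<Longrightarrow> \<bar>k n j t\<bar> \<le> c * wt n * wt j / w (n+j)" using c t by auto
      define dq where "dq = (\<lambda>n j. k n j s - k n j t)"
      have qd: "\<bar>dq n j\<bar> \<le> (2*c) * wt n * wt j / w (n+j)" if "1 \<le> n" "1 \<le> j" for n j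
      proof -
        have "\<bar>dq n j\<bar> \<le> \<bar>k n j s\<bar> + \<bar>k n j t\<bar>" unfolding dq_def by (rule abs_triangle_ineq4)
        also have "\<dots> \<le> c * wt n * wt j / w (n+j) + c * wt n * wt j / w (n+j)"
          using qs[OF that] qt[OF that] by (rule add_mono)
        also have "\<dots> = (2*c) * wt n * wt j / w (n+j)" by (simp add: field_simps)
        finally show ?thesis .
      qed
      have PPs: "\<And>f g n j. 1 \<le> n \<Longrightarrow> 1 \<le> j \<Longrightarrow>
         \<bar>k n j s\<bar> * \<bar>f n\<bar> * \<bar>g j\<bar> \<le> c * wt n * wt j / w (n+j) * \<bar>f n\<bar> * \<bar>g j\<bar>"
        using qs by (rule L.P_of_qbd)
      have PPt: "\<And>f g n j. 1 \<le> n \<Longrightarrow> 1 \<le> j \<Longrightarrow>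
         \<bar>k n j t\<bar> * \<bar>f n\<bar> * \<bar>g j\<bar> \<le> c * wt n * wt j / w (n+j) * \<bar>f n\<bar> * \<bar>g j\<bar>"
        using qt by (rule L.P_of_qbd)
      have PPd: "\<And>f g n j. 1 \<le> n \<Longrightarrow> 1 \<le> j \<Longrightarrow>
         \<bar>dq n j\<bar> * \<bar>f n\<bar> * \<bar>g j\<bar> \<le> (2*c) * wt n * wt j / w (n+j) * \<bar>f n\<bar> * \<bar>g j\<bar>"
        using qd by (rule L.P_of_qbd)
      have PPM: "\<bar>dq n j\<bar> * \<bar>fN n\<bar> * \<bar>fN j\<bar> \<le> M s * wt n * wt j / w (n+j) * \<bar>fN n\<bar> * \<bar>fN j\<bar>"
        if nj: "1 \<le> n" "1 \<le> j" for n j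
      proof (cases "n \<le> N \<and> j \<le> N")
        case True
        have pos: "0 < w (n+j)" "0 < wt n" "0 < wt j" using L.wpos[of "n+j"] L.wtpos[of n] L.wtpos[of j] nj by auto
        have "\<bar>dq n j\<bar> * cst n j \<le> (\<Sum>j'=1..N. \<bar>dq n j'\<bar> * cst n j')"
          by (rule member_le_sum) (use True nj cst0 in auto)
        also have "\<dots> \<le> M s" unfolding M_def dq_def
          by (rule member_le_sum[of n "{1..N}" "\<lambda>n. \<Sum>j'=1..N. \<bar>k n j' s - k n j' t\<bar> * cst n j'"])
            (use True nj cst0 in \<open>auto intro!: sum_nonneg mult_nonneg_nonneg\<close>)
        finally have le: "\<bar>dq n j\<bar> * cst n j \<le> M s" .
        have "\<bar>dq n j\<bar> = (\<bar>dq n j\<bar> * cst n j) * wt n * wt j / w (n+j)"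
          using pos unfolding cst_def by (simp add: field_simps)
        also have "\<dots> \<le> M s * wt n * wt j / w (n+j)"
          using le pos by (intro divide_right_mono mult_right_mono) auto
        finally show ?thesis by (intro mult_right_mono) auto
      qed (auto simp: fN_def)
      define Q where "Q = (\<lambda>n. Bop (\<lambda>n j. k n j s) g g n - Bop (\<lambda>n j. k n j s) f f n)"
      define A1 where "A1 = Bop dq dN f"
      define A2 where "A2 = Bop dq fN dN"
      define A3 where "A3 = Bop dq fN fN"
      have eD: "Bop dq f f n = Bop (\<lambda>n j. k n j s) f f n - Bop (\<lambda>n j. k n j t) f f n" for n
        by (rule Bop_lin[OF _ L.inner_summable[OF f f _ PPs[where f=f and g=f]] L.inner_summable[OF f f _ PPt[where f=f and g=f]]])
          (use c in \<open>auto simp: algebra_simps dq_def\<close>)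
      have e1: "A1 n = Bop dq f f n - Bop dq fN f n" for n unfolding A1_def
        by (rule Bop_lin[OF _ L.inner_summable[OF f f _ PPd[where f=f and g=f]] L.inner_summable[OF fN f _ PPd[where f=fN and g=f]]])
          (use c in \<open>auto simp: algebra_simps dN_def\<close>)
      have e2: "A2 n = Bop dq fN f n - Bop dq fN fN n" for n unfolding A2_def
        by (rule Bop_lin[OF _ L.inner_summable[OF fN f _ PPd[where f=fN and g=f]] L.inner_summable[OF fN fN _ PPd[where f=fN and g=fN]]])
          (use c in \<open>auto simp: algebra_simps dN_def\<close>)
      have decomp: "(\<lambda>n. Kop k s g n - Kop k t f n) = (\<lambda>n. Q n + (A1 n + (A2 n + A3 n)))"
      proof
        fix n
        show "Kop k s g n - Kop k t f n = Q n + (A1 n + (A2 n + A3 n))"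
          unfolding Kop_Bop Q_def e1 e2 A3_def eD by simp
      qed
      have wnn: "\<And>n. 1 \<le> n \<Longrightarrow> 0 \<le> w n" using L.wpos less_imp_le by blast
      have sA1: "summable (\<lambda>n. w n * \<bar>A1 n\<bar>)" and bA1: "wnorm w A1 \<le> 3/2 * (2*c) * wnorm wt dN * R"
        unfolding A1_def R_def using c by (intro L.Bop_bound[OF dN f _ PPd[where f=dN and g=f]]; simp)+
      have sA2: "summable (\<lambda>n. w n * \<bar>A2 n\<bar>)" and bA2: "wnorm w A2 \<le> 3/2 * (2*c) * wnorm wt fN * wnorm wt dN"
        unfolding A2_def using c by (intro L.Bop_bound[OF fN dN _ PPd[where f=fN and g=dN]]; simp)+
      have sA3: "summable (\<lambda>n. w n * \<bar>A3 n\<bar>)" and bA3: "wnorm w A3 \<le> 3/2 * M s * wnorm wt fN * wnorm wt fN"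
        unfolding A3_def using M0 by (intro L.Bop_bound[OF fN fN _ PPM]; simp)+
      have sQ: "summable (\<lambda>n. w n * \<bar>Q n\<bar>)" unfolding Q_def using c by (intro L.Bop_quad(1)[OF g f _ qs]) simp
      have bQ: "wnorm w Q \<le> 3/2 * c * (wnorm wt (\<lambda>n. g n - f n) * wnorm wt g + wnorm wt f * wnorm wt (\<lambda>n. g n - f n))"
        unfolding Q_def using c by (intro L.Bop_quad(2)[OF g f _ qs]) simp
      have T23: "summable (\<lambda>n. w n * \<bar>A2 n + A3 n\<bar>) \<and> wnorm w (\<lambda>n. A2 n + A3 n) \<le> wnorm w A2 + wnorm w A3"
        by (rule L.wnorm_tri[OF wnn _ _ sA2 sA3]) (simp_all add: A2_def A3_def)
      have T123: "summable (\<lambda>n. w n * \<bar>A1 n + (A2 n + A3 n)\<bar>) \<and>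
          wnorm w (\<lambda>n. A1 n + (A2 n + A3 n)) \<le> wnorm w A1 + wnorm w (\<lambda>n. A2 n + A3 n)"
        by (rule L.wnorm_tri[OF wnn _ _ sA1 T23[THEN conjunct1]]) (simp_all add: A1_def A2_def A3_def)
      have TQ: "summable (\<lambda>n. w n * \<bar>Q n + (A1 n + (A2 n + A3 n))\<bar>) \<and>
          wnorm w (\<lambda>n. Q n + (A1 n + (A2 n + A3 n))) \<le> wnorm w Q + wnorm w (\<lambda>n. A1 n + (A2 n + A3 n))"
        by (rule L.wnorm_tri[OF wnn _ _ sQ T123[THEN conjunct1]]) (simp_all add: Q_def A1_def A2_def A3_def)
      define d' where "d' = wnorm wt (\<lambda>n. g n - f n)"
      have gfe: "(\<lambda>n. g n - f n) \<in> ell1 wt" by (rule L.ell1_diff[OF g f])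
      have d'0: "0 \<le> d'" unfolding d'_def by (rule L.wnorm_nonneg[OF gfe])
      have d'1: "d' \<le> 1" "d' \<le> \<delta>1" using gf unfolding d'_def \<delta>_def by auto
      have wtn: "\<And>n. 1 \<le> n \<Longrightarrow> 0 \<le> wt n" using L.wtpos less_imp_le by blast
      have "wnorm wt (\<lambda>n. f n + (g n - f n)) \<le> wnorm wt f + wnorm wt (\<lambda>n. g n - f n)"
        using L.wnorm_tri[OF wtn f0 _ L.F_summable[OF f] L.F_summable[OF gfe]] g f0 by (simp add: ell1_def)
      then have gR: "wnorm wt g \<le> R + d'" unfolding R_def d'_def by simp
      have bQ': "wnorm w Q \<le> \<epsilon>/4"
      proof -
        have "d' * wnorm wt g \<le> d' * (R + 1)" using gR d'1 d'0 by (intro mult_left_mono) auto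
        then have "d' * wnorm wt g + R * d' \<le> (2*R+1) * d'" by (simp add: algebra_simps)
        then have "3/2 * c * (d' * wnorm wt g + R * d') \<le> 3/2 * c * ((2*R+1) * d')"
          using c by (intro mult_left_mono) auto
        then have "wnorm w Q \<le> 3/2 * c * ((2*R+1) * d')" using bQ[folded R_def d'_def] by linarith
        also have "\<dots> = (3/2 * c * (2*R+1)) * d'" by (simp add: mult.assoc)
        also have "\<dots> \<le> (3/2 * c * (2*R+1)) * \<delta>1" using d'1 c R0 by (intro mult_left_mono) auto
        also have "\<dots> \<le> (3/2 * c * (2*R+1) + 1) * \<delta>1" using \<delta>10 by (simp add: algebra_simps)
        also have "\<dots> = \<epsilon>/4" unfolding \<delta>1_def using pos1 by (intro aux_div) linarith
        finally show ?thesis .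
      qed
      have bA1': "wnorm w A1 \<le> 3 * c * R * \<eta>"
      proof -
        have "3/2 * (2*c) * wnorm wt dN * R \<le> 3/2 * (2*c) * \<eta> * R"
          using dNeta c R0 by (intro mult_right_mono mult_left_mono) auto
        then show ?thesis using bA1 by (simp add: algebra_simps)
      qed
      have bA2': "wnorm w A2 \<le> 3 * c * R * \<eta>"
      proof -
        have "wnorm wt fN * wnorm wt dN \<le> R * \<eta>" using fNR dNeta fN0 dN0 R0 by (intro mult_mono) auto
        then have "3/2 * (2*c) * (wnorm wt fN * wnorm wt dN) \<le> 3/2 * (2*c) * (R * \<eta>)"
          using c by (intro mult_left_mono) auto
        then show ?thesis using bA2 by (simp add: algebra_simps)
      qed
      have Ms: "M s < \<gamma>"
      proof -
        have "s \<in> Dom" using s by (simp add: Dom_def)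
        moreover have "dist s t < \<delta>c" using st unfolding \<delta>_def dist_real_def by auto
        ultimately show ?thesis using \<delta>c(2) Mt M0[of s] by (auto simp: dist_real_def)
      qed
      have bA3': "wnorm w A3 \<le> \<epsilon>/4"
      proof -
        have "wnorm wt fN * wnorm wt fN \<le> R * R" using fNR fN0 by (intro mult_mono) auto
        then have "3/2 * M s * (wnorm wt fN * wnorm wt fN) \<le> 3/2 * M s * (R * R)"
          using M0[of s] by (intro mult_left_mono) auto
        also have "\<dots> \<le> (3/2 * R * R + 1) * M s" using M0[of s] by (simp add: algebra_simps)
        also have "\<dots> \<le> (3/2 * R * R + 1) * \<gamma>" using Ms R0 by (intro mult_left_mono) auto
        also have "\<dots> = \<epsilon>/4" unfolding \<gamma>_def
        proof (intro aux_div)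
          have "0 \<le> 3/2 * R * R" using R0 by simp
          then show "3/2 * R * R + 1 \<noteq> 0" by linarith
        qed
        finally show ?thesis using bA3 by (simp add: algebra_simps)
      qed
      have "wnorm w (\<lambda>n. Kop k s g n - Kop k t f n) \<le> \<epsilon>/4 + 3*c*R*\<eta> + 3*c*R*\<eta> + \<epsilon>/4"
        unfolding decomp using TQ[THEN conjunct2] T123[THEN conjunct2] T23[THEN conjunct2] bQ' bA1' bA2' bA3' by linarith
      also have "\<dots> < \<epsilon>" using \<eta>b \<epsilon> by linarith
      finally show "wnorm w (\<lambda>n. Kop k s g n - Kop k t f n) < \<epsilon>" .
    qed
  qed
  show ?thesis using P1 P2 P3 by blast
qed

end
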